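(* Let $\lambda$ be a partition of $n$ and $1\le i\le n$. Let $T$ be the column superstandard tabloid of shape $\lambda$ with start $i$ and $T'$ the column superstandard tabloid of shape $\lambda$ with start $i+1$. Then $\operatorname{charge}(T')\equiv\operatorname{charge}(T)-1\pmod{d_\lambda}$.
   Context: Fix $n\ge1$; $\overline i=i+n\mathbb Z$, $[\overline n]=\{\overline1,\dots,\overline n\}$. A tabloid of shape $\lambda$ is a sequence $(T_1,\dots,T_{\ell(\lambda)})$ of pairwise disjoint subsets of $[\overline n]$ with $|T_r|=\lambda_r$ and union $[\overline n]$ (row 1 highest). The column superstandard tabloid of shape $\lambda$ with start $i$ is obtained by filling the columns of the Young diagram of $\lambda$, left to right and each from top to bottom, with consecutive entries $\overline i,\overline{i+1},\overline{i+2},\dots$, then taking $T_r$ to be the set of entries in row $r$. Broken order: $\overline1<\dots<\overline n$. Local charge: if $\lambda_k=\lambda_{k+1}=m$, list $T_k$ as $\overline{a_1}<\dots<\overline{a_m}$ (broken order); for $t=1,\dots,m$ in turn match $\overline{a_t}$ with the smallest unmatched element of $T_{k+1}$ larger than $\overline{a_t}$ if one exists, otherwise with the smallest unmatched element of $T_{k+1}$; $\operatorname{lch}_k(T)$ is the number of $t$ with $\overline{a_t}$ larger than its match. If $\lambda_k\ne\lambda_{k+1}$, $\operatorname{lch}_k(T)=0$. $\operatorname{charge}(T)=\sum_{k=1}^{\ell(\lambda)-1}k\cdot\operatorname{lch}_k(T)$. $d_\lambda=\gcd(\lambda'_1,\lambda'_2,\dots)$ with $\lambda'$ the conjugate partition.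 *)

theory Defs
  imports "HOL-Number_Theory.Cong"
begin

text \<open>Residues modulo n are represented by their representatives 1..n;
  the broken order on [n] is then the usual order on nat.
  A tabloid is a list of sets (row 1 = index 0).\<close>

definition is_partition :: "nat list \<Rightarrow> nat \<Rightarrow> bool" where
  "is_partition lam n \<longleftrightarrow> sorted (rev lam) \<and> (\<forall>x\<in>set lam. 0 < x) \<and> sum_list lam = n"

text \<open>Conjugate partition: lambda'_(j+1) = number of rows of length > j.\<close>
definition conj_part :: "nat list \<Rightarrow> nat \<Rightarrow> nat" where
  "conj_part lam j = card {r. r < length lam \<and> j < lam ! r}"

definition d_lambda :: "nat list \<Rightarrow> nat" where
  "d_lambda lam = Gcd {conj_part lam j | j. j < hd lam}"

text \<open>Column superstandard tabloid of shape lam with start i (residues mod n):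
  cell (r,c) (0-indexed) is the pos-th cell in column reading order,
  pos = (cells in columns < c) + r, and receives residue of i + pos.\<close>
definition css_entry :: "nat list \<Rightarrow> nat \<Rightarrow> nat \<Rightarrow> nat \<Rightarrow> nat \<Rightarrow> nat" where
  "css_entry lam n i r c = ((i + (\<Sum>j<c. conj_part lam j) + r + n - 1) mod n) + 1"

definition col_superstandard :: "nat list \<Rightarrow> nat \<Rightarrow> nat \<Rightarrow> nat set list" where
  "col_superstandard lam n i = map (\<lambda>r. {css_entry lam n i r c | c. c < lam ! r}) [0..<length lam]"

text \<open>Matching procedure for local charge: process a_1<...<a_m in order,
  U = unmatched elements of T_(k+1).\<close>
fun lch_aux :: "nat list \<Rightarrow> nat set \<Rightarrow> nat" where
  "lch_aux [] U = 0"
| "lch_aux (a # as) U =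
     (let b = (if {x \<in> U. a < x} \<noteq> {} then Min {x \<in> U. a < x} else Min U)
      in (if b < a then 1 else 0) + lch_aux as (U - {b}))"

text \<open>Local charge lch_k for 1 \<le> k < length lam (rows k, k+1 are list indices k-1, k).\<close>
definition lch :: "nat list \<Rightarrow> nat set list \<Rightarrow> nat \<Rightarrow> nat" where
  "lch lam T k = (if lam ! (k - 1) = lam ! k
                  then lch_aux (sorted_list_of_set (T ! (k - 1))) (T ! k) else 0)"

definition charge :: "nat list \<Rightarrow> nat set list \<Rightarrow> nat" where
  "charge lam T = (\<Sum>k = 1..<length lam. k * lch lam T k)"

end

theory Submission
  imports Defs
begin

definition shiftn :: "nat \<Rightarrow> nat \<Rightarrow> nat" where
  "shiftn n x = x mod n + 1"

lemma lch_aux_shift: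
  assumes "sorted xs" "distinct xs" "set xs \<subseteq> {1..n}"
  shows "lch_aux xs (shiftn n ` set xs) = (if n \<in> set xs \<and> 1 < n then 1 else 0)"
  using assms
proof (induction xs)
  case Nil
  then show ?case by simp
next
  case (Cons a as)
  have aless: "\<forall>y\<in>set as. a < y" using Cons.prems by (auto simp: less_le)
  show ?case
  proof (cases "a = n")
    case True
    then have "as = []" using aless Cons.prems(3) by (cases as) auto
    then show ?thesis using True Cons.prems by (auto simp: shiftn_def Let_def)
  next
    case False
    then have an: "a < n" "1 \<le> a" using Cons.prems(3) by auto
    have sa: "shiftn n a = a + 1" using an by (simp add: shiftn_def)
    have fin: "finite {x \<in> shiftn n ` set (a # as). a < x}" by simp
    have mem: "a + 1 \<in> {x \<in> shiftn n ` set (a # as). a < x}"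
    proof -
      have "shiftn n a \<in> shiftn n ` set (a # as)" by simp
      then show ?thesis using sa by simp
    qed
    have minle: "\<forall>x\<in>{x \<in> shiftn n ` set (a # as). a < x}. a + 1 \<le> x" by auto
    have Mn: "Min {x \<in> shiftn n ` set (a # as). a < x} = a + 1"
      by (rule Min_eqI[OF fin]) (use minle mem in auto)
    have inj: "inj_on (shiftn n) {1..n}"
    proof (rule inj_onI)
      fix x y assume "x \<in> {1..n}" "y \<in> {1..n}" "shiftn n x = shiftn n y"
      then show "x = y" unfolding shiftn_def
        by (cases "x = n"; cases "y = n") auto
    qed
    have "a \<notin> set as" using Cons.prems(2) by simp
    then have nin: "shiftn n a \<notin> shiftn n ` set as"
      using inj Cons.prems(3) by (auto simp: inj_on_image_mem_iff)
    have rest: "shiftn n ` set (a # as) - {a + 1} = shiftn n ` set as"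
      using nin sa by auto
    have "lch_aux (a # as) (shiftn n ` set (a # as)) = lch_aux as (shiftn n ` set as)"
      using mem Mn rest by (auto simp: Let_def)
    also have "\<dots> = (if n \<in> set as \<and> 1 < n then 1 else 0)"
      using Cons.prems by (intro Cons.IH) auto
    finally show ?thesis using False by simp
  qed
qed

lemma downclosed_eq:
  fixes S :: "nat set"
  assumes "finite S" "\<And>x y. y \<in> S \<Longrightarrow> x \<le> y \<Longrightarrow> x \<in> S"
  shows "S = {..<card S}"
proof (cases "S = {}")
  case True then show ?thesis by simp
next
  case False
  define m where "m = Max S"
  have "m \<in> S" using False assms(1) m_def by simp
  have "S = {..m}"
  proof
    show "S \<subseteq> {..m}" using assms(1) m_def by auto
    show "{..m} \<subseteq> S" using assms(2) \<open>m \<in> S\<close> by auto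
  qed
  then show ?thesis by auto
qed

lemma part_dec:
  assumes "is_partition lam n" "r \<le> r'" "r' < length lam"
  shows "lam ! r' \<le> lam ! r"
  using assms sorted_rev_nth_mono unfolding is_partition_def by blast

lemma part_pos:
  assumes "is_partition lam n" "r < length lam"
  shows "0 < lam ! r"
  using assms unfolding is_partition_def by auto

lemma cp_iff:
  assumes "is_partition lam n"
  shows "r < conj_part lam c \<longleftrightarrow> r < length lam \<and> c < lam ! r"
proof -
  let ?S = "{r. r < length lam \<and> c < lam ! r}"
  have "?S = {..<card ?S}"
  proof (rule downclosed_eq)
    show "finite ?S" by simp
    fix x y assume "y \<in> ?S" "x \<le> y"
    then show "x \<in> ?S" using part_dec[OF assms, of x y] by auto
  qed
  then show ?thesis unfolding conj_part_def by (metis (no_types, lifting) lessThan_iff mem_Collect_eq)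
qed

lemma cp0:
  assumes "is_partition lam n"
  shows "conj_part lam 0 = length lam"
proof -
  have "{r. r < length lam \<and> 0 < lam ! r} = {..<length lam}"
    using part_pos[OF assms] by auto
  then show ?thesis unfolding conj_part_def by simp
qed

lemma hd_ge:
  assumes "is_partition lam n" "r < length lam"
  shows "lam ! r \<le> hd lam"
  using part_dec[OF assms(1), of 0 r] assms(2) by (cases lam) auto

lemma n_eq:
  assumes "is_partition lam n"
  shows "n = (\<Sum>c<hd lam. conj_part lam c)"
proof -
  define C where "C = Sigma {..<length lam} (\<lambda>r. {..<lam ! r})"
  have "n = (\<Sum>r<length lam. lam ! r)"
    using assms unfolding is_partition_def by (simp add: sum_list_sum_nth atLeast0LessThan)
  also have "\<dots> = card C" unfolding C_def by (simp add: card_SigmaI)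
  also have "C = (\<lambda>(c,r). (r,c)) ` Sigma {..<hd lam} (\<lambda>c. {..<conj_part lam c})"
    unfolding C_def using cp_iff[OF assms] hd_ge[OF assms]
    by (auto simp: image_iff) (metis order_less_le_trans)
  also have "card \<dots> = card (Sigma {..<hd lam} (\<lambda>c. {..<conj_part lam c}))"
    by (rule card_image) (auto simp: inj_on_def)
  also have "\<dots> = (\<Sum>c<hd lam. conj_part lam c)" by (simp add: card_SigmaI)
  finally show ?thesis .
qed

lemma d_dvd:
  assumes "j < hd lam"
  shows "d_lambda lam dvd conj_part lam j"
  unfolding d_lambda_def by (rule Gcd_dvd) (use assms in auto)


definition Pc :: "nat list \<Rightarrow> nat \<Rightarrow> nat" where
  "Pc lam c = (\<Sum>j<c. conj_part lam j)"

lemma css_entry_Pc: "css_entry lam n i r c = ((i + Pc lam c + r + n - 1) mod n) + 1"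
  unfolding css_entry_def Pc_def by simp

lemma Pc_Suc: "Pc lam (Suc c) = Pc lam c + conj_part lam c"
  unfolding Pc_def by simp

lemma Pc_mono: "c \<le> c' \<Longrightarrow> Pc lam c \<le> Pc lam c'"
  unfolding Pc_def by (rule sum_mono2) auto

lemma Pc_dvd: "c \<le> hd lam \<Longrightarrow> d_lambda lam dvd Pc lam c"
  unfolding Pc_def by (rule dvd_sum) (use d_dvd in auto)

lemma n_Pc: "is_partition lam n \<Longrightarrow> n = Pc lam (hd lam)"
  using n_eq unfolding Pc_def by blast

lemma cell_exists: "q < Pc lam m \<Longrightarrow> \<exists>c<m. Pc lam c \<le> q \<and> q < Pc lam (Suc c)"
proof (induction m)
  case 0 then show ?case by (simp add: Pc_def)
next
  case (Suc m)
  show ?case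
  proof (cases "q < Pc lam m")
    case True then show ?thesis using Suc.IH by (meson less_SucI)
  next
    case False then show ?thesis using Suc.prems by auto
  qed
qed

lemma cell_unique:
  assumes "r < conj_part lam c" "r' < conj_part lam c'" "Pc lam c + r = Pc lam c' + r'"
  shows "c = c' \<and> r = r'"
proof -
  have "\<not> c < c'" if "r < conj_part lam c" "Pc lam c + r = Pc lam c' + r'" for c c' r r'
  proof
    assume "c < c'"
    then have "Pc lam (Suc c) \<le> Pc lam c'" by (intro Pc_mono) simp
    then show False using that Pc_Suc[of lam c] by simp
  qed
  then have "c = c'" using assms by (metis nat_neq_iff)
  then show ?thesis using assms by simp
qed

lemma cell_lt:
  assumes "is_partition lam n" "r < length lam" "c < lam ! r"
  shows "Pc lam c + r < n" "r < conj_part lam c" "c < hd lam"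
proof -
  show r: "r < conj_part lam c" using cp_iff[OF assms(1)] assms by simp
  show c: "c < hd lam" using hd_ge[OF assms(1,2)] assms(3) by simp
  have "Pc lam (Suc c) \<le> Pc lam (hd lam)" using c by (intro Pc_mono) simp
  then show "Pc lam c + r < n" using r Pc_Suc[of lam c] n_Pc[OF assms(1)] by simp
qed

lemma arith_css:
  fixes x n i :: nat
  assumes "x < n" "1 \<le> i" "i \<le> n"
  shows "((i + x + n - 1) mod n) + 1 = n \<longleftrightarrow> x = n - i"
proof -
  consider "i + x < n" | "i + x = n" | "n < i + x" using nat_neq_iff by blast
  then show ?thesis
  proof cases
    case 1
    then have e: "i + x + n - 1 = (i + x - 1) + n" using assms by linarith
    have "(i + x + n - 1) mod n = (i + x - 1) mod n" unfolding e by (rule mod_add_self2)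
    also have "\<dots> = i + x - 1" using 1 by (intro mod_less) linarith
    finally show ?thesis using 1 assms by linarith
  next
    case 2
    then have e: "i + x + n - 1 = (n - 1) + n" using assms by linarith
    have "(i + x + n - 1) mod n = (n - 1) mod n" unfolding e by (rule mod_add_self2)
    also have "\<dots> = n - 1" using assms by (intro mod_less) linarith
    finally show ?thesis using 2 assms by linarith
  next
    case 3
    then have e: "i + x + n - 1 = ((i + x - n - 1) + n) + n" using assms by linarith
    have "(i + x + n - 1) mod n = (i + x - n - 1) mod n" unfolding e mod_add_self2 by (rule refl)
    also have "\<dots> = i + x - n - 1" using 3 assms by (intro mod_less) linarith
    finally show ?thesis using 3 assms by linarith
  qed
qed

lemma css_nth:
  "r < length lam \<Longrightarrow> col_superstandard lam n i ! r = {css_entry lam n i r c | c. c < lam ! r}"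
  unfolding col_superstandard_def by simp

lemma css_shift:
  assumes "1 \<le> n"
  shows "css_entry lam n i (Suc r) c = shiftn n (css_entry lam n i r c)"
proof -
  have "i + Pc lam c + Suc r + n - 1 = Suc (i + Pc lam c + r + n - 1)" using assms by simp
  then show ?thesis unfolding css_entry_Pc shiftn_def by (simp add: mod_Suc_eq)
qed

lemma css_range: "1 \<le> n \<Longrightarrow> css_entry lam n i r c \<in> {1..n}"
  unfolding css_entry_def by (simp add: Suc_leI)

lemma lch_css:
  assumes "is_partition lam n" "1 \<le> n" "1 \<le> k" "k < length lam"
  shows "lch lam (col_superstandard lam n i) k =
    (if lam ! (k - 1) = lam ! k \<and> n \<in> col_superstandard lam n i ! (k - 1) \<and> 1 < n then 1 else 0)"
proof (cases "lam ! (k - 1) = lam ! k")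
  case False then show ?thesis unfolding lch_def by simp
next
  case True
  define S where "S = col_superstandard lam n i ! (k - 1)"
  have S: "S = {css_entry lam n i (k - 1) c | c. c < lam ! (k - 1)}"
    unfolding S_def using assms by (simp add: css_nth)
  have fin: "finite S" unfolding S by simp
  have sub: "S \<subseteq> {1..n}" unfolding S using css_range[OF assms(2)] by blast
  have Tk: "col_superstandard lam n i ! k = shiftn n ` S"
  proof -
    have "col_superstandard lam n i ! k = {css_entry lam n i (Suc (k - 1)) c | c. c < lam ! (k - 1)}"
      using assms True by (simp add: css_nth)
    also have "\<dots> = shiftn n ` S" unfolding S css_shift[OF assms(2)] by blast
    finally show ?thesis .
  qed
  have "lch lam (col_superstandard lam n i) k = lch_aux (sorted_list_of_set S) (shiftn n ` S)"
    unfolding lch_def using True Tk S_def by simp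
  also have "\<dots> = lch_aux (sorted_list_of_set S) (shiftn n ` set (sorted_list_of_set S))"
    using fin by simp
  also have "\<dots> = (if n \<in> set (sorted_list_of_set S) \<and> 1 < n then 1 else 0)"
    by (rule lch_aux_shift) (use fin sub in auto)
  also have "\<dots> = (if n \<in> S \<and> 1 < n then 1 else 0)" using fin by simp
  finally show ?thesis using True S_def by simp
qed


lemma css_mem_iff:
  fixes n i :: nat
  assumes "is_partition lam n" "1 \<le> i" "i \<le> n" "r < length lam"
  shows "n \<in> col_superstandard lam n i ! r \<longleftrightarrow> (\<exists>c<lam ! r. Pc lam c + r = n - i)"
proof -
  have "n \<in> col_superstandard lam n i ! r \<longleftrightarrow> (\<exists>c<lam ! r. css_entry lam n i r c = n)"
    using assms(4) by (auto simp: css_nth) metis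
  also have "\<dots> \<longleftrightarrow> (\<exists>c<lam ! r. Pc lam c + r = n - i)"
  proof (intro ex_cong1 conj_cong refl)
    fix c assume "c < lam ! r"
    then have "Pc lam c + r < n" using cell_lt(1)[OF assms(1,4)] by simp
    then show "css_entry lam n i r c = n \<longleftrightarrow> Pc lam c + r = n - i"
      unfolding css_entry_Pc using arith_css[of "Pc lam c + r" n i] assms
      by (simp add: add.assoc)
  qed
  finally show ?thesis .
qed

lemma cp_eq_k:
  assumes "is_partition lam n" "1 \<le> k" "k < length lam" "lam ! (k - 1) \<noteq> lam ! k"
  shows "conj_part lam (lam ! k) = k"
proof -
  have lt: "lam ! k < lam ! (k - 1)" using part_dec[OF assms(1), of "k - 1" k] assms by simp
  have "\<forall>r'. r' < conj_part lam (lam ! k) \<longleftrightarrow> r' < k"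
  proof
    fix r'
    show "r' < conj_part lam (lam ! k) \<longleftrightarrow> r' < k"
    proof
      assume "r' < conj_part lam (lam ! k)"
      then have "r' < length lam" "lam ! k < lam ! r'" using cp_iff[OF assms(1)] by auto
      then show "r' < k" using part_dec[OF assms(1), of k r'] by (meson not_le not_less)
    next
      assume "r' < k"
      then have "lam ! (k - 1) \<le> lam ! r'" using part_dec[OF assms(1), of r' "k - 1"] assms by simp
      then show "r' < conj_part lam (lam ! k)" using cp_iff[OF assms(1)] lt \<open>r' < k\<close> assms by simp
    qed
  qed
  then show ?thesis by (metis nat_neq_iff less_irrefl)
qed

lemma charge_formula:
  fixes n i :: nat
  assumes P: "is_partition lam n" and n1: "1 < n" and i: "1 \<le> i" "i \<le> n"
  shows "[int (charge lam (col_superstandard lam n i)) = int (n - i) + 1] (mod int (d_lambda lam))"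
proof -
  define q where "q = n - i"
  define T where "T = col_superstandard lam n i"
  define L where "L = length lam"
  have qn: "q < n" using i n1 unfolding q_def by simp
  then have "q < Pc lam (hd lam)" using n_Pc[OF P] by simp
  then obtain c0 where c0: "c0 < hd lam" "Pc lam c0 \<le> q" "q < Pc lam (Suc c0)"
    using cell_exists by blast
  define r0 where "r0 = q - Pc lam c0"
  have r0c: "r0 < conj_part lam c0" using c0 Pc_Suc[of lam c0] unfolding r0_def by simp
  then have r0L: "r0 < L" and c0r: "c0 < lam ! r0" using cp_iff[OF P] unfolding L_def by auto
  have qeq: "Pc lam c0 + r0 = q" using c0 unfolding r0_def by simp
  have memiff: "n \<in> T ! r \<longleftrightarrow> r = r0" if "r < L" for r
  proof -
    have "n \<in> T ! r \<longleftrightarrow> (\<exists>c<lam ! r. Pc lam c + r = q)"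
      unfolding T_def q_def using css_mem_iff[OF P i] that L_def by simp
    also have "\<dots> \<longleftrightarrow> r = r0"
    proof
      assume "\<exists>c<lam ! r. Pc lam c + r = q"
      then obtain c where "c < lam ! r" "Pc lam c + r = q" by blast
      moreover have "r < conj_part lam c" using cp_iff[OF P] that \<open>c < lam ! r\<close> L_def by simp
      ultimately show "r = r0" using cell_unique[OF _ r0c] qeq by metis
    next
      assume "r = r0" then show "\<exists>c<lam ! r. Pc lam c + r = q" using c0r qeq by blast
    qed
    finally show ?thesis .
  qed
  have "charge lam T = (\<Sum>k = 1..<L. k * lch lam T k)" unfolding charge_def L_def ..
  also have "\<dots> = (\<Sum>k = 1..<L. if k = Suc r0 then (if lam ! r0 = lam ! (Suc r0) then Suc r0 else 0) else 0)"
  proof (rule sum.cong[OF refl])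
    fix k assume k: "k \<in> {1..<L}"
    have "lch lam T k = (if lam ! (k - 1) = lam ! k \<and> n \<in> T ! (k - 1) \<and> 1 < n then 1 else 0)"
      unfolding T_def using lch_css[OF P _ _ ] n1 k L_def by simp
    also have "\<dots> = (if lam ! (k - 1) = lam ! k \<and> k - 1 = r0 then 1 else 0)"
    proof -
      have "k - 1 < L" using k by auto
      then show ?thesis using memiff[of "k - 1"] n1 by auto
    qed
    finally show "k * lch lam T k = (if k = Suc r0 then (if lam ! r0 = lam ! (Suc r0) then Suc r0 else 0) else 0)"
      using k by auto
  qed
  also have "\<dots> = (if Suc r0 < L then (if lam ! r0 = lam ! (Suc r0) then Suc r0 else 0) else 0)"
    by (simp add: sum.delta)
  finally have ch: "charge lam T = (if Suc r0 < L \<and> lam ! r0 = lam ! (Suc r0) then Suc r0 else 0)"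
    by simp
  have hd0: "0 < hd lam" using c0 by simp
  have ddvd: "d_lambda lam dvd Suc r0" if "charge lam T = 0"
  proof (cases "Suc r0 < L")
    case True
    then have "lam ! r0 \<noteq> lam ! (Suc r0)" using ch that by auto
    then have "conj_part lam (lam ! Suc r0) = Suc r0" using cp_eq_k[OF P, of "Suc r0"] True L_def by simp
    moreover have "lam ! Suc r0 < hd lam"
      using part_dec[OF P, of r0 "Suc r0"] hd_ge[OF P, of r0] True \<open>lam ! r0 \<noteq> lam ! (Suc r0)\<close> r0L L_def
      by simp
    ultimately show ?thesis using d_dvd by metis
  next
    case False
    then have "Suc r0 = L" using r0L by simp
    then show ?thesis using d_dvd[OF hd0] cp0[OF P] L_def by simp
  qed
  have c1: "[int (charge lam T) = int (Suc r0)] (mod int (d_lambda lam))"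
  proof (cases "charge lam T = 0")
    case True
    have "int (d_lambda lam) dvd int (Suc r0)" using ddvd[OF True] by (simp only: int_dvd_int_iff)
    then have "[int (Suc r0) = 0] (mod int (d_lambda lam))" by (simp only: cong_0_iff)
    then show ?thesis using True by (simp only: cong_sym_eq of_nat_0)
  next
    case False
    then have "charge lam T = Suc r0" using ch by (auto split: if_splits)
    then show ?thesis by simp
  qed
  have "d_lambda lam dvd Pc lam c0" using Pc_dvd c0 by simp
  then have dv: "int (d_lambda lam) dvd int (Pc lam c0)" by (simp only: int_dvd_int_iff)
  have "int q + 1 - int (Suc r0) = int (Pc lam c0)" using qeq by auto
  then have "[int q + 1 = int (Suc r0)] (mod int (d_lambda lam))"
    unfolding cong_iff_dvd_diff using dv by simp
  then have "[int (Suc r0) = int q + 1] (mod int (d_lambda lam))" by (rule cong_sym)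
  then show ?thesis using c1 unfolding T_def q_def by (rule cong_trans[rotated])
qed


lemma css_period:
  assumes "1 \<le> n"
  shows "col_superstandard lam n (i + n) = col_superstandard lam n i"
proof -
  have "css_entry lam n (i + n) r c = css_entry lam n i r c" for r c
  proof -
    have "i + n + Pc lam c + r + n - 1 = (i + Pc lam c + r + n - 1) + n" using assms by simp
    then show ?thesis unfolding css_entry_Pc by (simp only: mod_add_self2)
  qed
  then show ?thesis unfolding col_superstandard_def by simp
qed

lemma d_dvd_n: "is_partition lam n \<Longrightarrow> d_lambda lam dvd n"
  using Pc_dvd[of "hd lam" lam] n_Pc[of lam n] by simp

theorem lemma8p5:
  fixes lam :: "nat list" and n i :: nat
  assumes "n \<ge> 1" and "is_partition lam n" and "1 \<le> i" and "i \<le> n"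
  shows "[int (charge lam (col_superstandard lam n (i + 1)))
            = int (charge lam (col_superstandard lam n i)) - 1] (mod int (d_lambda lam))"
proof (cases "n = 1")
  case True
  then have "d_lambda lam = 1" using d_dvd_n[OF assms(2)] by simp
  then show ?thesis by simp
next
  case False
  then have n1: "1 < n" using assms(1) by simp
  let ?d = "int (d_lambda lam)"
  let ?c = "\<lambda>j. int (charge lam (col_superstandard lam n j))"
  have Hi: "[?c i = int (n - i) + 1] (mod ?d)" using charge_formula[OF assms(2) n1 assms(3,4)] .
  then have Hi': "[?c i - 1 = int (n - i) + 1 - 1] (mod ?d)" by (intro cong_diff cong_refl)
  show ?thesis
  proof (cases "i < n")
    case True
    have "[?c (i + 1) = int (n - (i + 1)) + 1] (mod ?d)"
      using charge_formula[OF assms(2) n1, of "i + 1"] True by simp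
    moreover have "int (n - (i + 1)) + 1 = int (n - i) + 1 - 1" using True by simp
    ultimately show ?thesis using Hi' by (metis cong_sym cong_trans)
  next
    case False
    then have iN: "i = n" using assms(4) by simp
    have "?c (i + 1) = ?c 1" using css_period[OF assms(1), of lam 1] iN by (simp add: add.commute)
    moreover have "[?c 1 = int (n - 1) + 1] (mod ?d)" using charge_formula[OF assms(2) n1, of 1] n1 by simp
    moreover have "int (n - 1) + 1 = int n" using n1 by simp
    moreover have "[int n = 0] (mod ?d)" using d_dvd_n[OF assms(2)] by (simp add: cong_0_iff)
    moreover have "int (n - i) + 1 - 1 = 0" using iN by simp
    ultimately show ?thesis using Hi' by (metis cong_sym cong_trans)
  qed
qed

end
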